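(* Let $Q$ be a groupoid quantale with base locale $A$ and let $G=\mathcal G(Q)$ be its associated open groupoid. Then $Q$ is a principal quantale if and only if $G$ is an effective equivalence relation.
   Context: Let $A$ be a locale (frame), whose multiplication is $\wedge$. An $A$-$A$-bimodule is a sup-lattice $M$ with actions $(a,m)\mapsto a\triangleright m$ and $(m,a)\mapsto m\triangleleft a$, each preserving arbitrary joins in each variable, such that $1_A\triangleright m=m$, $(a\wedge b)\triangleright m=a\triangleright(b\triangleright m)$, $m\triangleleft 1_A=m$, $m\triangleleft(a\wedge b)=(m\triangleleft a)\triangleleft b$, $(a\triangleright m)\triangleleft b=a\triangleright(m\triangleleft b)$. An $A$-$A$-quantale is such a bimodule $Q$ with an associative multiplication preserving joins in each variable with $(a\triangleright x)y=a\triangleright(xy)$, $(x\triangleleft a)y=x(a\triangleright y)$, $(xy)\triangleleft a=x(y\triangleleft a)$; it is involutive if it has a join-preserving $x\mapsto x^*$ with $x^{**}=x$, $(xy)^*=y^*x^*$, $(a\triangleright(x\triangleleft b))^*=b\triangleright(x^*\triangleleft a)$. $1_Q$ is the top of $Q$. A support is a join-preserving $\varsigma:Q\to A$ with $\varsigma(1_Q)=1_A$, $\varsigma(x)\triangleright y\le xx^*y$, $\varsigma(x)\triangleright x=x$; equivariant if $\varsigma(a\triangleright x)=a\wedge\varsigma(x)$. A based quantal frame is an involutive $A$-$A$-quantale that is a frame with $(a\triangleright x)\wedge y=a\triangleright(x\wedge y)$ and $(x\triangleleft a)\wedge y=(x\wedge y)\triangleleft a$; an equivariantly supported quantal frame is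 one with an equivariant support. It is reflexive if it has a frame homomorphism $\upsilon:Q\to A$ with $\upsilon(a\triangleright1_Q)=a=\upsilon(1_Q\triangleleft a)$. $Q\otimes_AQ$ is the quotient of $Q\otimes Q$ by $x\otimes(a\triangleright y)=(x\triangleleft a)\otimes y$, $\mu_A:Q\otimes_AQ\to Q$ the induced multiplication; $Q$ is multiplicative if the right adjoint of $\mu_A$ preserves joins. Unit laws: $\bigvee_{xy\le a}\upsilon(x)\triangleright y=a$ for all $a$; inverse law: $\upsilon(a)\triangleright1_Q=\bigvee_{xy^*\le a}x\wedge y$ for all $a$. A groupoid quantale is a multiplicative equivariantly supported reflexive based quantal frame satisfying the unit laws and inverse law. Its open groupoid $\mathcal G(Q)$ has $\mathcal O(G_0)=A$, $\mathcal O(G_1)=Q$, $d^*(a)=a\triangleright1_Q$, $i^*(x)=x^*$, $r=d\circ i$, $u^*=\upsilon$, $\mathcal O(G_2)=Q\otimes_AQ$, $m^*(a)=\bigvee_{xy\le a}x\otimes y$. Let $R(Q)=\{x\in Q\mid x1_Q\le x\}$, $L(Q)=\{x^*\mid x\in R(Q)\}$, $T(Q)=R(Q)\cap L(Q)$. A principal quantale is an equivariantly supported quantal frame $Q$ such that $Q\cong R(Q)\otimes_{T(Q)}L(Q)$ in the category of frames (the pushout of the inclusions $T(Q)\to R(Q)$, $T(Q)\to L(Q)$). An open localic groupoid $G$ is an effective equivalence relation if $(G_1,d,r)$ is the kernel pair in the category of locales of the coequalizer $G_0\to G_0/G$ of $d$ and $r$, i.e. the square formed by $d,r$ and two copies of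 $G_0\to G_0/G$ is a pullback. *)

theory Defs
  imports Main
begin

definition frame_type :: "'a::complete_lattice itself \<Rightarrow> bool" where
  "frame_type _ \<longleftrightarrow> (\<forall>(a::'a) S. inf a (Sup S) = Sup ((inf a) ` S))"

definition bimodule :: "('a::complete_lattice \<Rightarrow> 'm::complete_lattice \<Rightarrow> 'm) \<Rightarrow> ('m \<Rightarrow> 'a \<Rightarrow> 'm) \<Rightarrow> bool" where
  "bimodule la ra \<longleftrightarrow>
     (\<forall>S m. la (Sup S) m = Sup ((\<lambda>a. la a m) ` S)) \<and>
     (\<forall>a X. la a (Sup X) = Sup (la a ` X)) \<and>
     (\<forall>X a. ra (Sup X) a = Sup ((\<lambda>m. ra m a) ` X)) \<and>
     (\<forall>m S. ra m (Sup S) = Sup (ra m ` S)) \<and>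
     (\<forall>m. la top m = m) \<and>
     (\<forall>a b m. la (inf a b) m = la a (la b m)) \<and>
     (\<forall>m. ra m top = m) \<and>
     (\<forall>m a b. ra m (inf a b) = ra (ra m a) b) \<and>
     (\<forall>a m b. ra (la a m) b = la a (ra m b))"

definition bi_quantale :: "('a::complete_lattice \<Rightarrow> 'q::complete_lattice \<Rightarrow> 'q) \<Rightarrow> ('q \<Rightarrow> 'a \<Rightarrow> 'q) \<Rightarrow> ('q \<Rightarrow> 'q \<Rightarrow> 'q) \<Rightarrow> bool" where
  "bi_quantale la ra mu \<longleftrightarrow> bimodule la ra \<and>
     (\<forall>x y z. mu (mu x y) z = mu x (mu y z)) \<and>
     (\<forall>X y. mu (Sup X) y = Sup ((\<lambda>x. mu x y) ` X)) \<and>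
     (\<forall>x Y. mu x (Sup Y) = Sup (mu x ` Y)) \<and>
     (\<forall>a x y. mu (la a x) y = la a (mu x y)) \<and>
     (\<forall>x a y. mu (ra x a) y = mu x (la a y)) \<and>
     (\<forall>x y a. ra (mu x y) a = mu x (ra y a))"

definition involutive_bi_quantale ::
  "('a::complete_lattice \<Rightarrow> 'q::complete_lattice \<Rightarrow> 'q) \<Rightarrow> ('q \<Rightarrow> 'a \<Rightarrow> 'q) \<Rightarrow> ('q \<Rightarrow> 'q \<Rightarrow> 'q) \<Rightarrow> ('q \<Rightarrow> 'q) \<Rightarrow> bool" where
  "involutive_bi_quantale la ra mu iv \<longleftrightarrow> bi_quantale la ra mu \<and>
     (\<forall>X. iv (Sup X) = Sup (iv ` X)) \<and>
     (\<forall>x. iv (iv x) = x) \<and>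
     (\<forall>x y. iv (mu x y) = mu (iv y) (iv x)) \<and>
     (\<forall>a x b. iv (la a (ra x b)) = la b (ra (iv x) a))"

definition based_quantal_frame ::
  "('a::complete_lattice \<Rightarrow> 'q::complete_lattice \<Rightarrow> 'q) \<Rightarrow> ('q \<Rightarrow> 'a \<Rightarrow> 'q) \<Rightarrow> ('q \<Rightarrow> 'q \<Rightarrow> 'q) \<Rightarrow> ('q \<Rightarrow> 'q) \<Rightarrow> bool" where
  "based_quantal_frame la ra mu iv \<longleftrightarrow>
     frame_type TYPE('a) \<and> frame_type TYPE('q) \<and> involutive_bi_quantale la ra mu iv \<and>
     (\<forall>a x y. inf (la a x) y = la a (inf x y)) \<and>
     (\<forall>x a y. inf (ra x a) y = ra (inf x y) a)"

definition is_support ::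
  "('a::complete_lattice \<Rightarrow> 'q::complete_lattice \<Rightarrow> 'q) \<Rightarrow> ('q \<Rightarrow> 'q \<Rightarrow> 'q) \<Rightarrow> ('q \<Rightarrow> 'q) \<Rightarrow> ('q \<Rightarrow> 'a) \<Rightarrow> bool" where
  "is_support la mu iv s \<longleftrightarrow>
     (\<forall>X. s (Sup X) = Sup (s ` X)) \<and> s top = top \<and>
     (\<forall>x y. la (s x) y \<le> mu (mu x (iv x)) y) \<and>
     (\<forall>x. la (s x) x = x)"

definition equivariant_support ::
  "('a::complete_lattice \<Rightarrow> 'q::complete_lattice \<Rightarrow> 'q) \<Rightarrow> ('q \<Rightarrow> 'q \<Rightarrow> 'q) \<Rightarrow> ('q \<Rightarrow> 'q) \<Rightarrow> ('q \<Rightarrow> 'a) \<Rightarrow> bool" where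
  "equivariant_support la mu iv s \<longleftrightarrow> is_support la mu iv s \<and> (\<forall>a x. s (la a x) = inf a (s x))"

definition eq_supported_quantal_frame ::
  "('a::complete_lattice \<Rightarrow> 'q::complete_lattice \<Rightarrow> 'q) \<Rightarrow> ('q \<Rightarrow> 'a \<Rightarrow> 'q) \<Rightarrow> ('q \<Rightarrow> 'q \<Rightarrow> 'q) \<Rightarrow> ('q \<Rightarrow> 'q) \<Rightarrow> ('q \<Rightarrow> 'a) \<Rightarrow> bool" where
  "eq_supported_quantal_frame la ra mu iv s \<longleftrightarrow>
     based_quantal_frame la ra mu iv \<and> equivariant_support la mu iv s"

definition reflexive_map ::
  "('a::complete_lattice \<Rightarrow> 'q::complete_lattice \<Rightarrow> 'q) \<Rightarrow> ('q \<Rightarrow> 'a \<Rightarrow> 'q) \<Rightarrow> ('q \<Rightarrow> 'a) \<Rightarrow> bool" where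
  "reflexive_map la ra u \<longleftrightarrow>
     (\<forall>X. u (Sup X) = Sup (u ` X)) \<and> (\<forall>x y. u (inf x y) = inf (u x) (u y)) \<and> u top = top \<and>
     (\<forall>a. u (la a top) = a \<and> u (ra top a) = a)"

text \<open>Q \<otimes> Q (sup-lattice tensor product) is represented by its bimorphism ideals
  (down-closed subsets of Q \<times> Q closed under joins in each coordinate); the quotient
  Q \<otimes>_A Q by x \<otimes> (a acting on y) = (x acted on by a) \<otimes> y is the set of those ideals
  saturated for these relations.\<close>
definition tensorA :: "('a::complete_lattice \<Rightarrow> 'q::complete_lattice \<Rightarrow> 'q) \<Rightarrow> ('q \<Rightarrow> 'a \<Rightarrow> 'q) \<Rightarrow> ('q \<times> 'q) set set" where
  "tensorA la ra = {U.
     (\<forall>x y x' y'. (x, y) \<in> U \<longrightarrow> x' \<le> x \<longrightarrow> y' \<le> y \<longrightarrow> (x', y') \<in> U) \<and>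
     (\<forall>S y. (\<forall>s\<in>S. (s, y) \<in> U) \<longrightarrow> (Sup S, y) \<in> U) \<and>
     (\<forall>x S. (\<forall>s\<in>S. (x, s) \<in> U) \<longrightarrow> (x, Sup S) \<in> U) \<and>
     (\<forall>x a y. (x, la a y) \<in> U \<longleftrightarrow> (ra x a, y) \<in> U)}"

definition tensorA_Sup :: "('a::complete_lattice \<Rightarrow> 'q::complete_lattice \<Rightarrow> 'q) \<Rightarrow> ('q \<Rightarrow> 'a \<Rightarrow> 'q) \<Rightarrow> ('q \<times> 'q) set set \<Rightarrow> ('q \<times> 'q) set" where
  "tensorA_Sup la ra W = \<Inter> {U \<in> tensorA la ra. \<Union> W \<subseteq> U}"

definition muA :: "('q::complete_lattice \<Rightarrow> 'q \<Rightarrow> 'q) \<Rightarrow> ('q \<times> 'q) set \<Rightarrow> 'q" where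
  "muA mu U = Sup {mu x y | x y. (x, y) \<in> U}"

definition muA_radj :: "('a::complete_lattice \<Rightarrow> 'q::complete_lattice \<Rightarrow> 'q) \<Rightarrow> ('q \<Rightarrow> 'a \<Rightarrow> 'q) \<Rightarrow> ('q \<Rightarrow> 'q \<Rightarrow> 'q) \<Rightarrow> 'q \<Rightarrow> ('q \<times> 'q) set" where
  "muA_radj la ra mu z = tensorA_Sup la ra {U \<in> tensorA la ra. muA mu U \<le> z}"

definition multiplicative :: "('a::complete_lattice \<Rightarrow> 'q::complete_lattice \<Rightarrow> 'q) \<Rightarrow> ('q \<Rightarrow> 'a \<Rightarrow> 'q) \<Rightarrow> ('q \<Rightarrow> 'q \<Rightarrow> 'q) \<Rightarrow> bool" where
  "multiplicative la ra mu \<longleftrightarrow>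
     (\<forall>Z. muA_radj la ra mu (Sup Z) = tensorA_Sup la ra (muA_radj la ra mu ` Z))"

definition unit_laws :: "('a::complete_lattice \<Rightarrow> 'q::complete_lattice \<Rightarrow> 'q) \<Rightarrow> ('q \<Rightarrow> 'q \<Rightarrow> 'q) \<Rightarrow> ('q \<Rightarrow> 'a) \<Rightarrow> bool" where
  "unit_laws la mu u \<longleftrightarrow> (\<forall>a. Sup {la (u x) y | x y. mu x y \<le> a} = a)"

definition inverse_law :: "('a::complete_lattice \<Rightarrow> 'q::complete_lattice \<Rightarrow> 'q) \<Rightarrow> ('q \<Rightarrow> 'q \<Rightarrow> 'q) \<Rightarrow> ('q \<Rightarrow> 'q) \<Rightarrow> ('q \<Rightarrow> 'a) \<Rightarrow> bool" where
  "inverse_law la mu iv u \<longleftrightarrow> (\<forall>a. la (u a) top = Sup {inf x y | x y. mu x (iv y) \<le> a})"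

definition groupoid_quantale ::
  "('a::complete_lattice \<Rightarrow> 'q::complete_lattice \<Rightarrow> 'q) \<Rightarrow> ('q \<Rightarrow> 'a \<Rightarrow> 'q) \<Rightarrow> ('q \<Rightarrow> 'q \<Rightarrow> 'q) \<Rightarrow> ('q \<Rightarrow> 'q) \<Rightarrow> ('q \<Rightarrow> 'a) \<Rightarrow> ('q \<Rightarrow> 'a) \<Rightarrow> bool" where
  "groupoid_quantale la ra mu iv s u \<longleftrightarrow>
     eq_supported_quantal_frame la ra mu iv s \<and> reflexive_map la ra u \<and>
     multiplicative la ra mu \<and> unit_laws la mu u \<and> inverse_law la mu iv u"

text \<open>Given frame homomorphisms f : B \<rightarrow> C and g : B \<rightarrow> D (frames given as subframes
  B, C, D of complete lattices), the frame pushout C \<otimes>_B D is constructed as the frame of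
  C\<oplus>D-ideals (down-closed subsets of C \<times> D closed under joins in each coordinate)
  that are saturated for the relations (c \<sqinter> f b) \<otimes> d = c \<otimes> (d \<sqinter> g b).\<close>
definition pushout_ideals ::
  "'b set \<Rightarrow> 'c::complete_lattice set \<Rightarrow> 'd::complete_lattice set \<Rightarrow> ('b \<Rightarrow> 'c) \<Rightarrow> ('b \<Rightarrow> 'd) \<Rightarrow> ('c \<times> 'd) set set" where
  "pushout_ideals B C D f g = {U. U \<subseteq> C \<times> D \<and>
     (\<forall>c d c' d'. (c, d) \<in> U \<longrightarrow> c' \<in> C \<longrightarrow> d' \<in> D \<longrightarrow> c' \<le> c \<longrightarrow> d' \<le> d \<longrightarrow> (c', d') \<in> U) \<and>
     (\<forall>S d. S \<subseteq> C \<longrightarrow> d \<in> D \<longrightarrow> (\<forall>s\<in>S. (s, d) \<in> U) \<longrightarrow> (Sup S, d) \<in> U) \<and>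
     (\<forall>c S. c \<in> C \<longrightarrow> S \<subseteq> D \<longrightarrow> (\<forall>s\<in>S. (c, s) \<in> U) \<longrightarrow> (c, Sup S) \<in> U) \<and>
     (\<forall>b c d. b \<in> B \<longrightarrow> c \<in> C \<longrightarrow> d \<in> D \<longrightarrow> ((inf c (f b), d) \<in> U \<longleftrightarrow> (c, inf d (g b)) \<in> U))}"

text \<open>The commutative square (f, g; h, k) with h : C \<rightarrow> E, k : D \<rightarrow> E is a pushout of frames
  iff the canonical comparison map C \<otimes>_B D \<rightarrow> E is an isomorphism (bijective frame map).\<close>
definition is_frame_pushout ::
  "'b set \<Rightarrow> 'c::complete_lattice set \<Rightarrow> 'd::complete_lattice set \<Rightarrow> 'e::complete_lattice set \<Rightarrow>
   ('b \<Rightarrow> 'c) \<Rightarrow> ('b \<Rightarrow> 'd) \<Rightarrow> ('c \<Rightarrow> 'e) \<Rightarrow> ('d \<Rightarrow> 'e) \<Rightarrow> bool" where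
  "is_frame_pushout B C D E f g h k \<longleftrightarrow>
     (\<forall>b\<in>B. h (f b) = k (g b)) \<and>
     bij_betw (\<lambda>U. Sup {inf (h c) (k d) | c d. (c, d) \<in> U}) (pushout_ideals B C D f g) E"

definition Rset :: "('q::complete_lattice \<Rightarrow> 'q \<Rightarrow> 'q) \<Rightarrow> 'q set" where
  "Rset mu = {x. mu x top \<le> x}"

definition Lset :: "('q::complete_lattice \<Rightarrow> 'q \<Rightarrow> 'q) \<Rightarrow> ('q \<Rightarrow> 'q) \<Rightarrow> 'q set" where
  "Lset mu iv = iv ` Rset mu"

definition Tset :: "('q::complete_lattice \<Rightarrow> 'q \<Rightarrow> 'q) \<Rightarrow> ('q \<Rightarrow> 'q) \<Rightarrow> 'q set" where
  "Tset mu iv = Rset mu \<inter> Lset mu iv"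

definition principal_quantale ::
  "('a::complete_lattice \<Rightarrow> 'q::complete_lattice \<Rightarrow> 'q) \<Rightarrow> ('q \<Rightarrow> 'a \<Rightarrow> 'q) \<Rightarrow> ('q \<Rightarrow> 'q \<Rightarrow> 'q) \<Rightarrow> ('q \<Rightarrow> 'q) \<Rightarrow> bool" where
  "principal_quantale la ra mu iv \<longleftrightarrow>
     (\<exists>s. eq_supported_quantal_frame la ra mu iv s) \<and>
     is_frame_pushout (Tset mu iv) (Rset mu) (Lset mu iv) (UNIV :: 'q set) id id id id"

text \<open>Inverse images of the domain and range maps of G(Q): d^*(a) = a acting on top, r^* = i^* \<circ> d^*.\<close>
definition gq_d :: "('a::complete_lattice \<Rightarrow> 'q::complete_lattice \<Rightarrow> 'q) \<Rightarrow> 'a \<Rightarrow> 'q" where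
  "gq_d la a = la a top"

definition gq_r :: "('a::complete_lattice \<Rightarrow> 'q::complete_lattice \<Rightarrow> 'q) \<Rightarrow> ('q \<Rightarrow> 'q) \<Rightarrow> 'a \<Rightarrow> 'q" where
  "gq_r la iv a = iv (gq_d la a)"

text \<open>For locale maps d, r : G_1 \<rightarrow> G_0 given by frame homomorphisms dstar, rstar : O(G_0) \<rightarrow> O(G_1):
  the coequalizer G_0 \<rightarrow> G_0/G of d, r in locales is the equalizer of dstar, rstar in frames,
  i.e. the subframe {a. dstar a = rstar a} of O(G_0) with its inclusion; the kernel-pair square is
  a pullback of locales iff the corresponding square of frames is a pushout.\<close>
definition coequalizer_frame :: "('a \<Rightarrow> 'q) \<Rightarrow> ('a \<Rightarrow> 'q) \<Rightarrow> 'a set" where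
  "coequalizer_frame dstar rstar = {a. dstar a = rstar a}"

definition effective_equivalence_relation ::
  "('a::complete_lattice \<Rightarrow> 'q::complete_lattice) \<Rightarrow> ('a \<Rightarrow> 'q) \<Rightarrow> bool" where
  "effective_equivalence_relation dstar rstar \<longleftrightarrow>
     is_frame_pushout (coequalizer_frame dstar rstar) (UNIV :: 'a set) (UNIV :: 'a set) (UNIV :: 'q set)
       id id dstar rstar"

end

theory Submission
  imports Defs
begin

lemma pi_parts:
  assumes "U \<in> pushout_ideals B C D f g"
  shows "U \<subseteq> C \<times> D"
    "\<forall>c d c' d'. (c, d) \<in> U \<longrightarrow> c' \<in> C \<longrightarrow> d' \<in> D \<longrightarrow> c' \<le> c \<longrightarrow> d' \<le> d \<longrightarrow> (c', d') \<in> U"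
    "\<forall>S d. S \<subseteq> C \<longrightarrow> d \<in> D \<longrightarrow> (\<forall>s\<in>S. (s, d) \<in> U) \<longrightarrow> (Sup S, d) \<in> U"
    "\<forall>c S. c \<in> C \<longrightarrow> S \<subseteq> D \<longrightarrow> (\<forall>s\<in>S. (c, s) \<in> U) \<longrightarrow> (c, Sup S) \<in> U"
    "\<forall>b c d. b \<in> B \<longrightarrow> c \<in> C \<longrightarrow> d \<in> D \<longrightarrow> ((inf c (f b), d) \<in> U \<longleftrightarrow> (c, inf d (g b)) \<in> U)"
  using assms unfolding pushout_ideals_def mem_Collect_eq by simp_all

lemma pi_sub: "U \<in> pushout_ideals B C D f g \<Longrightarrow> U \<subseteq> C \<times> D"
  by (rule pi_parts(1))
lemma pi_down: "U \<in> pushout_ideals B C D f g \<Longrightarrow> (c,d) \<in> U \<Longrightarrow> c' \<in> C \<Longrightarrow> d' \<in> D \<Longrightarrow> c' \<le> c \<Longrightarrow> d' \<le> d \<Longrightarrow> (c',d') \<in> U"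
  using pi_parts(2) by metis
lemma pi_sup1: "U \<in> pushout_ideals B C D f g \<Longrightarrow> S \<subseteq> C \<Longrightarrow> d \<in> D \<Longrightarrow> (\<forall>s\<in>S. (s, d) \<in> U) \<Longrightarrow> (Sup S, d) \<in> U"
  using pi_parts(3) by metis
lemma pi_sup2: "U \<in> pushout_ideals B C D f g \<Longrightarrow> c \<in> C \<Longrightarrow> S \<subseteq> D \<Longrightarrow> (\<forall>s\<in>S. (c, s) \<in> U) \<Longrightarrow> (c, Sup S) \<in> U"
  using pi_parts(4) by metis
lemma pi_sat: "U \<in> pushout_ideals B C D f g \<Longrightarrow> b \<in> B \<Longrightarrow> c \<in> C \<Longrightarrow> d \<in> D \<Longrightarrow> ((inf c (f b), d) \<in> U \<longleftrightarrow> (c, inf d (g b)) \<in> U)"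
  using pi_parts(5) by metis

lemma pi_intro:
  assumes "U \<subseteq> C \<times> D"
    "\<And>c d c' d'. (c, d) \<in> U \<Longrightarrow> c' \<in> C \<Longrightarrow> d' \<in> D \<Longrightarrow> c' \<le> c \<Longrightarrow> d' \<le> d \<Longrightarrow> (c', d') \<in> U"
    "\<And>S d. S \<subseteq> C \<Longrightarrow> d \<in> D \<Longrightarrow> (\<forall>s\<in>S. (s, d) \<in> U) \<Longrightarrow> (Sup S, d) \<in> U"
    "\<And>c S. c \<in> C \<Longrightarrow> S \<subseteq> D \<Longrightarrow> (\<forall>s\<in>S. (c, s) \<in> U) \<Longrightarrow> (c, Sup S) \<in> U"
    "\<And>b c d. b \<in> B \<Longrightarrow> c \<in> C \<Longrightarrow> d \<in> D \<Longrightarrow> ((inf c (f b), d) \<in> U \<longleftrightarrow> (c, inf d (g b)) \<in> U)"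
  shows "U \<in> pushout_ideals B C D f g"
  unfolding pushout_ideals_def mem_Collect_eq
  apply (intro conjI allI impI)
  using assms apply blast
  using assms(2) apply blast
  using assms(3) apply blast
  using assms(4) apply blast
  using assms(5) apply blast
  done


lemma transport:
  fixes f :: "'a::complete_lattice \<Rightarrow> 'q::complete_lattice" and g :: "'a \<Rightarrow> 'q"
  assumes injf: "inj f" and injg: "inj g"
    and finf: "\<And>x y. f (inf x y) = inf (f x) (f y)"
    and ginf: "\<And>x y. g (inf x y) = inf (g x) (g y)"
    and fsup: "\<And>X. f (Sup X) = Sup (f ` X)"
    and gsup: "\<And>X. g (Sup X) = Sup (g ` X)"
    and fgE: "\<And>b. b \<in> E \<Longrightarrow> f b = g b"
    and TE: "T = f ` E"
  shows "bij_betw (\<lambda>U. (\<lambda>(c,d). (f c, g d)) ` U) (pushout_ideals E UNIV UNIV id id)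
           (pushout_ideals T (range f) (range g) id id)"
proof -
  define Phi where "Phi = (\<lambda>U. (\<lambda>(c,d). (f c, g d)) ` U)"
  define Psi where "Psi = (\<lambda>V. {(c,d). (f c, g d) \<in> V})"
  have mem: "(f x, g y) \<in> Phi U \<longleftrightarrow> (x, y) \<in> U" for x y U
    unfolding Phi_def using injf injg by (auto dest: injD)
  have fmono: "x \<le> y \<Longrightarrow> f x \<le> f y" for x y
    by (metis finf inf.absorb_iff1 inf.cobounded2)
  have gmono: "x \<le> y \<Longrightarrow> g x \<le> g y" for x y
    by (metis ginf inf.absorb_iff1 inf.cobounded2)
  have frefl: "f x \<le> f y \<Longrightarrow> x \<le> y" for x y
    by (metis finf inf.absorb_iff1 injD injf inf.commute)
  have grefl: "g x \<le> g y \<Longrightarrow> x \<le> y" for x y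
    by (metis ginf inf.absorb_iff1 injD injg inf.commute)
  show ?thesis unfolding Phi_def[symmetric]
  proof (rule bij_betw_byWitness[where f'=Psi])
    show "\<forall>U\<in>pushout_ideals E UNIV UNIV id id. Psi (Phi U) = U"
      using mem unfolding Psi_def by auto
    show "\<forall>V\<in>pushout_ideals T (range f) (range g) id id. Phi (Psi V) = V"
    proof
      fix V assume "V \<in> pushout_ideals T (range f) (range g) id id"
      then have "V \<subseteq> range f \<times> range g" by (rule pi_sub)
      then show "Phi (Psi V) = V" unfolding Phi_def Psi_def by force
    qed
    show "Phi ` pushout_ideals E UNIV UNIV id id \<subseteq> pushout_ideals T (range f) (range g) id id"
    proof
      fix V assume "V \<in> Phi ` pushout_ideals E UNIV UNIV id id"
      then obtain U where U: "U \<in> pushout_ideals E UNIV UNIV id id" and V: "V = Phi U" by auto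
      show "V \<in> pushout_ideals T (range f) (range g) id id"
      proof (rule pi_intro)
        show "V \<subseteq> range f \<times> range g" unfolding V Phi_def by auto
      next
        fix c d c' d' assume h: "(c, d) \<in> V" "c' \<in> range f" "d' \<in> range g" "c' \<le> c" "d' \<le> d"
        from h(1) obtain x y where xy: "(x,y) \<in> U" "c = f x" "d = g y" unfolding V Phi_def by auto
        from h(2,3) obtain x' y' where xy': "c' = f x'" "d' = g y'" by auto
        have "x' \<le> x" "y' \<le> y" using h(4,5) xy xy' frefl grefl by auto
        then have "(x', y') \<in> U" using pi_down[OF U xy(1)] by simp
        then show "(c', d') \<in> V" unfolding V xy' mem .
      next
        fix S d assume h: "S \<subseteq> range f" "d \<in> range g" "\<forall>s\<in>S. (s, d) \<in> V"
        define S0 where "S0 = {c. f c \<in> S}"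
        have SS: "S = f ` S0" using h(1) unfolding S0_def by auto
        obtain y where y: "d = g y" using h(2) by auto
        have "\<forall>c\<in>S0. (c, y) \<in> U" using h(3) mem unfolding S0_def V y by auto
        then have "(Sup S0, y) \<in> U" using pi_sup1[OF U] by simp
        then show "(Sup S, d) \<in> V" unfolding SS fsup[symmetric] y V mem .
      next
        fix c S assume h: "c \<in> range f" "S \<subseteq> range g" "\<forall>s\<in>S. (c, s) \<in> V"
        define S0 where "S0 = {d. g d \<in> S}"
        have SS: "S = g ` S0" using h(2) unfolding S0_def by auto
        obtain x where x: "c = f x" using h(1) by auto
        have "\<forall>d\<in>S0. (x, d) \<in> U" using h(3) mem unfolding S0_def V x by auto
        then have "(x, Sup S0) \<in> U" using pi_sup2[OF U] by simp
        then show "(c, Sup S) \<in> V" unfolding SS gsup[symmetric] x V mem .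
      next
        fix b c d assume h: "b \<in> T" "c \<in> range f" "d \<in> range g"
        obtain b0 where b0: "b0 \<in> E" "b = f b0" using h(1) TE by auto
        obtain x y where xy: "c = f x" "d = g y" using h by auto
        have e1: "(inf c (id b), d) = (f (inf x b0), g y)" using b0 xy finf by simp
        have e2: "(c, inf d (id b)) = (f x, g (inf y b0))" using b0 xy ginf fgE by simp
        have sat: "(inf x b0, y) \<in> U \<longleftrightarrow> (x, inf y b0) \<in> U"
          using pi_sat[OF U b0(1)] by simp
        show "((inf c (id b), d) \<in> V \<longleftrightarrow> (c, inf d (id b)) \<in> V)"
          unfolding e1 e2 V mem by (rule sat)
      qed
    qed
    show "Psi ` pushout_ideals T (range f) (range g) id id \<subseteq> pushout_ideals E UNIV UNIV id id"
    proof
      fix U assume "U \<in> Psi ` pushout_ideals T (range f) (range g) id id"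
      then obtain V where V: "V \<in> pushout_ideals T (range f) (range g) id id" and U: "U = Psi V" by auto
      show "U \<in> pushout_ideals E UNIV UNIV id id"
      proof (rule pi_intro)
        show "U \<subseteq> UNIV \<times> UNIV" by simp
      next
        fix c d c' d' assume h: "(c, d) \<in> U" "c' \<in> (UNIV::'a set)" "d' \<in> (UNIV::'a set)" "c' \<le> c" "d' \<le> d"
        have "(f c, g d) \<in> V" using h(1) unfolding U Psi_def by simp
        moreover have "f c' \<le> f c" "g d' \<le> g d" using h fmono gmono by auto
        ultimately have "(f c', g d') \<in> V" using pi_down[OF V] by simp
        then show "(c', d') \<in> U" unfolding U Psi_def by simp
      next
        fix S d assume "S \<subseteq> (UNIV::'a set)" "d \<in> (UNIV::'a set)" "\<forall>s\<in>S. (s, d) \<in> U"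
        then have "\<forall>s\<in>f ` S. (s, g d) \<in> V" unfolding U Psi_def by auto
        then have "(Sup (f ` S), g d) \<in> V" by (intro pi_sup1[OF V]) auto
        then show "(Sup S, d) \<in> U" unfolding U Psi_def by (simp add: fsup)
      next
        fix c S assume "c \<in> (UNIV::'a set)" "S \<subseteq> (UNIV::'a set)" "\<forall>s\<in>S. (c, s) \<in> U"
        then have "\<forall>s\<in>g ` S. (f c, s) \<in> V" unfolding U Psi_def by auto
        then have "(f c, Sup (g ` S)) \<in> V" by (intro pi_sup2[OF V]) auto
        then show "(c, Sup S) \<in> U" unfolding U Psi_def by (simp add: gsup)
      next
        fix b c d assume b: "b \<in> E" "c \<in> (UNIV::'a set)" "d \<in> (UNIV::'a set)"
        have fbT: "f b \<in> T" using b TE by auto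
        have "(inf c (id b), d) \<in> U \<longleftrightarrow> (inf (f c) (id (f b)), g d) \<in> V" unfolding U Psi_def using finf by simp
        also have "\<dots> \<longleftrightarrow> (f c, inf (g d) (id (f b))) \<in> V" using pi_sat[OF V fbT] by simp
        also have "\<dots> \<longleftrightarrow> (c, inf d (id b)) \<in> U" unfolding U Psi_def using ginf fgE[OF b(1)] by simp
        finally show "(inf c (id b), d) \<in> U \<longleftrightarrow> (c, inf d (id b)) \<in> U" .
      qed
    qed
  qed
qed

lemma supmono:
  fixes h :: "'b::complete_lattice \<Rightarrow> 'c::complete_lattice"
  assumes "\<And>X. h (Sup X) = Sup (h ` X)" and "x \<le> y"
  shows "h x \<le> h y"
proof -
  have "h y = h (Sup {x, y})" using assms(2) by (simp add: sup.absorb2)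
  also have "\<dots> = Sup {h x, h y}" using assms(1)[of "{x,y}"] by simp
  also have "\<dots> = sup (h x) (h y)" by simp
  finally show ?thesis by (metis sup.cobounded1)
qed

theorem theorem5p16:
  fixes la :: "'a::complete_lattice \<Rightarrow> 'q::complete_lattice \<Rightarrow> 'q"
    and ra :: "'q \<Rightarrow> 'a \<Rightarrow> 'q"
    and mu :: "'q \<Rightarrow> 'q \<Rightarrow> 'q"
    and iv :: "'q \<Rightarrow> 'q"
    and s :: "'q \<Rightarrow> 'a"
    and u :: "'q \<Rightarrow> 'a"
  assumes "groupoid_quantale la ra mu iv s u"
  shows "principal_quantale la ra mu iv \<longleftrightarrow>
         effective_equivalence_relation (gq_d la) (gq_r la iv)"
proof -
  have eqs: "eq_supported_quantal_frame la ra mu iv s" and refl: "reflexive_map la ra u"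
    using assms unfolding groupoid_quantale_def by auto
  have bq: "based_quantal_frame la ra mu iv" and sup: "is_support la mu iv s"
    using eqs unfolding eq_supported_quantal_frame_def equivariant_support_def by auto
  have inv: "involutive_bi_quantale la ra mu iv"
    and bas1: "\<And>a x y. inf (la a x) y = la a (inf x y)"
    and bas2: "\<And>x a y. inf (ra x a) y = ra (inf x y) a"
    using bq unfolding based_quantal_frame_def by auto
  have quant: "bi_quantale la ra mu"
    and ivsup: "\<And>X. iv (Sup X) = Sup (iv ` X)"
    and ivtw: "\<And>a x b. iv (la a (ra x b)) = la b (ra (iv x) a)"
    using inv unfolding involutive_bi_quantale_def by auto
  have bim: "bimodule la ra"
    and musup2: "\<And>x Y. mu x (Sup Y) = Sup (mu x ` Y)"
    and mula: "\<And>a x y. mu (la a x) y = la a (mu x y)"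
    and muass: "\<And>x y z. mu (mu x y) z = mu x (mu y z)"
    using quant unfolding bi_quantale_def by auto
  have lasup1: "\<And>S m. la (Sup S) m = Sup ((\<lambda>a. la a m) ` S)"
    and lasup2: "\<And>a X. la a (Sup X) = Sup (la a ` X)"
    and rasup2: "\<And>m S. ra m (Sup S) = Sup (ra m ` S)"
    and latop: "\<And>m. la top m = m"
    and lainf: "\<And>a b m. la (inf a b) m = la a (la b m)"
    and ratop: "\<And>m. ra m top = m"
    and rainf: "\<And>m a b. ra m (inf a b) = ra (ra m a) b"
    using bim unfolding bimodule_def by auto
  have s1: "\<And>x y. la (s x) y \<le> mu (mu x (iv x)) y" and s2: "\<And>x. la (s x) x = x"
    using sup unfolding is_support_def by auto
  have u1: "\<And>a. u (la a top) = a" and u2: "\<And>a. u (ra top a) = a"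
    using refl unfolding reflexive_map_def by auto
  define f where "f = (\<lambda>a. la a top)"
  define g where "g = (\<lambda>a. ra top a)"
  have ivtop: "iv top = top"
  proof -
    have "iv (iv top) \<le> iv top" by (rule supmono[OF ivsup]) simp
    then show ?thesis using inv unfolding involutive_bi_quantale_def by (simp add: top_le)
  qed
  have ivf: "iv (f a) = g a" for a
    using ivtw[of a top top] unfolding f_def g_def by (simp add: ratop latop ivtop)
  have gd: "gq_d la = f" unfolding gq_d_def f_def by simp
  have gr: "gq_r la iv = g" unfolding gq_r_def gq_d_def using ivf by (auto simp: f_def)
  have finf: "f (inf x y) = inf (f x) (f y)" for x y
    unfolding f_def by (simp add: lainf bas1)
  have ginf: "g (inf x y) = inf (g x) (g y)" for x y
    unfolding g_def by (metis rainf bas2 inf_top_left inf.commute)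
  have fsup: "f (Sup X) = Sup (f ` X)" for X unfolding f_def by (simp add: lasup1)
  have gsup: "g (Sup X) = Sup (g ` X)" for X unfolding g_def by (simp add: rasup2)
  have injf: "inj f" by (metis f_def injI u1)
  have injg: "inj g" by (metis g_def injI u2)
  have R: "Rset mu = range f"
  proof
    show "Rset mu \<subseteq> range f"
    proof
      fix x assume "x \<in> Rset mu"
      then have x: "mu x top \<le> x" unfolding Rset_def by simp
      have m2: "mu x (mu (iv x) top) \<le> mu x top" by (rule supmono[OF musup2]) simp
      have "la (s x) top \<le> mu (mu x (iv x)) top" by (rule s1)
      also have "\<dots> = mu x (mu (iv x) top)" by (rule muass)
      also have "\<dots> \<le> x" using m2 x by (rule order_trans)
      finally have le1: "f (s x) \<le> x" unfolding f_def .
      have m3: "la (s x) x \<le> la (s x) top" by (rule supmono[OF lasup2]) simp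
      have le2: "x \<le> f (s x)" unfolding f_def
        using s2[of x] m3 by simp
      from le1 le2 show "x \<in> range f" by (metis antisym rangeI)
    qed
    show "range f \<subseteq> Rset mu"
    proof
      fix x assume "x \<in> range f"
      then obtain a where a: "x = la a top" unfolding f_def by auto
      have "mu x top = la a (mu top top)" unfolding a by (rule mula)
      also have "\<dots> \<le> la a top" by (rule supmono[OF lasup2]) simp
      finally show "x \<in> Rset mu" unfolding Rset_def a by simp
    qed
  qed
  have L: "Lset mu iv = range g" unfolding Lset_def R using ivf by (auto simp: image_iff)
  define E where "E = {a. f a = g a}"
  have CE: "coequalizer_frame (gq_d la) (gq_r la iv) = E"
    unfolding coequalizer_frame_def gd gr E_def by simp
  have TE: "Tset mu iv = f ` E"
  proof
    show "Tset mu iv \<subseteq> f ` E"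
    proof
      fix x assume "x \<in> Tset mu iv"
      then have "x \<in> range f" "x \<in> range g" unfolding Tset_def R L by auto
      then obtain a b where "x = f a" "x = g b" by blast
      moreover then have "a = b" using u1 u2 unfolding f_def g_def by metis
      ultimately show "x \<in> f ` E" unfolding E_def by (metis (mono_tags) image_eqI mem_Collect_eq)
    qed
    show "f ` E \<subseteq> Tset mu iv" unfolding Tset_def R L E_def by (auto, metis rangeI)
  qed
  have fgE: "\<And>b. b \<in> E \<Longrightarrow> f b = g b" unfolding E_def by simp
  have bij: "bij_betw (\<lambda>U. (\<lambda>(c,d). (f c, g d)) ` U) (pushout_ideals E UNIV UNIV id id)
           (pushout_ideals (Tset mu iv) (range f) (range g) id id)"
    by (rule transport[OF injf injg finf ginf fsup gsup fgE TE])
  have comp: "(\<lambda>U. Sup {inf (id c) (id d) | c d. (c, d) \<in> U}) \<circ> (\<lambda>U. (\<lambda>(c,d). (f c, g d)) ` U)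
     = (\<lambda>U. Sup {inf (f c) (g d) | c d. (c, d) \<in> U})"
  proof
    fix U
    have "{inf (id c) (id d) | c d. (c, d) \<in> (\<lambda>(c,d). (f c, g d)) ` U} = {inf (f c) (g d) | c d. (c, d) \<in> U}"
      by (auto, fastforce)
    then show "((\<lambda>U. Sup {inf (id c) (id d) | c d. (c, d) \<in> U}) \<circ> (\<lambda>U. (\<lambda>(c,d). (f c, g d)) ` U)) U
      = Sup {inf (f c) (g d) | c d. (c, d) \<in> U}" by simp
  qed
  have "principal_quantale la ra mu iv \<longleftrightarrow>
     bij_betw (\<lambda>U. Sup {inf (id c) (id d) | c d. (c, d) \<in> U}) (pushout_ideals (Tset mu iv) (range f) (range g) id id) UNIV"
  proof -
    have ex: "\<exists>s. eq_supported_quantal_frame la ra mu iv s" using eqs by blast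
    have tr: "(\<forall>b\<in>Tset mu iv. True) = True" by simp
    show ?thesis unfolding principal_quantale_def is_frame_pushout_def R L
      by (simp only: ex tr simp_thms ball_simps)
  qed
  also have "\<dots> \<longleftrightarrow> bij_betw (\<lambda>U. Sup {inf (f c) (g d) | c d. (c, d) \<in> U}) (pushout_ideals E UNIV UNIV id id) UNIV"
    using bij_betw_comp_iff[OF bij, of "\<lambda>U. Sup {inf (id c) (id d) | c d. (c, d) \<in> U}" UNIV] unfolding comp .
  also have "\<dots> \<longleftrightarrow> effective_equivalence_relation (gq_d la) (gq_r la iv)"
  proof -
    have tr: "(\<forall>b\<in>E. f (id b) = g (id b)) = True" unfolding E_def by simp
    have CE': "coequalizer_frame f g = E" unfolding coequalizer_frame_def E_def by simp
    show ?thesis unfolding effective_equivalence_relation_def is_frame_pushout_def gd gr CE'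
      by (simp only: tr simp_thms ball_simps)
  qed
  finally show ?thesis .
qed

end
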